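(* For any $\alpha\in(0,1)$, any $f\in\mathcal V_1$ and any $x>0$, $$c(f)\le\frac{1+2\alpha}{3(1-\alpha)}\,c_{1,\alpha}\,\big(1-f(x)\big)^{\min(1-\alpha,\alpha)}\big(1+x^{-2\alpha}\big).$$
   Context: Fix $\alpha\in(0,1)$ and set $c_{1,\alpha}=\frac{2^{2\alpha-1}\Gamma(\frac12+\alpha)}{\sqrt{\pi}\,\Gamma(1-\alpha)}$. Let $\rho(x)=(1+|x|)^{-\alpha}$ and $\mathcal V_0=\{f\in C(\mathbb{R}): f\text{ even},\ \|\rho f\|_{L^\infty}<\infty\}$. Let $\eta=2\left(\frac{3}{2(3-2\alpha)(5-2\alpha)(1+4^{\alpha})}\right)^{1/\min(\alpha,1-\alpha)}$. $\mathcal V_1$ is the set of $f\in\mathcal V_0$ such that $f(0)=1$; $f\ge0$ and $f$ is non-increasing on $[0,\infty)$; $x\mapsto f(\sqrt x)$ is convex on $[0,\infty)$; $f(x)\ge\max(0,1-x^2)$ for all $x$; and $f'_-(1/2)\le-\eta$. For $f\in\mathcal V_1$, $c(f)=\frac{2\alpha(1+2\alpha)}{3}c_{1,\alpha}\int_0^\infty\frac{1-f(\xi)}{\xi^{1+2\alpha}}\,d\xi$. *)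

theory Defs
  imports "HOL-Analysis.Analysis"
begin

definition c1 :: "real \<Rightarrow> real" where
  "c1 \<alpha> = 2 powr (2*\<alpha> - 1) * Gamma (1/2 + \<alpha>) / (sqrt pi * Gamma (1 - \<alpha>))"

definition rho :: "real \<Rightarrow> real \<Rightarrow> real" where
  "rho \<alpha> x = (1 + \<bar>x\<bar>) powr (- \<alpha>)"

definition V0 :: "real \<Rightarrow> (real \<Rightarrow> real) set" where
  "V0 \<alpha> = {f. continuous_on UNIV f \<and> (\<forall>x. f (- x) = f x)
               \<and> (\<exists>M. \<forall>x. \<bar>rho \<alpha> x * f x\<bar> \<le> M)}"

definition eta :: "real \<Rightarrow> real" where
  "eta \<alpha> = 2 * (3 / (2 * (3 - 2*\<alpha>) * (5 - 2*\<alpha>) * (1 + 4 powr \<alpha>)))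
                 powr (1 / min \<alpha> (1 - \<alpha>))"

definition V1 :: "real \<Rightarrow> (real \<Rightarrow> real) set" where
  "V1 \<alpha> = {f. f \<in> V0 \<alpha> \<and> f 0 = 1
     \<and> (\<forall>x. 0 \<le> x \<longrightarrow> 0 \<le> f x)
     \<and> (\<forall>x y. 0 \<le> x \<longrightarrow> x \<le> y \<longrightarrow> f y \<le> f x)
     \<and> convex_on {0..} (\<lambda>x. f (sqrt x))
     \<and> (\<forall>x. max 0 (1 - x\<^sup>2) \<le> f x)
     \<and> (\<exists>D. (f has_real_derivative D) (at (1/2) within {..1/2}) \<and> D \<le> - eta \<alpha>)}"

definition cf :: "real \<Rightarrow> (real \<Rightarrow> real) \<Rightarrow> real" where
  "cf \<alpha> f = 2*\<alpha>*(1 + 2*\<alpha>) / 3 * c1 \<alpha> *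
     (LBINT \<xi>:{0<..}. (1 - f \<xi>) / \<xi> powr (1 + 2*\<alpha>))"

end

theory Submission
  imports Defs
begin

lemma core:
  fixes a b :: real
  assumes a0: "0<a" and a1: "a<1" and b0: "0 \<le> b"
  shows "((\<lambda>\<xi>. min b (\<xi>^2) * \<xi> powr (-1-2*a)) has_integral (b powr (1-a) / (2*a*(1-a)))) {0<..}"
proof (cases "b = 0")
  case True
  have "((\<lambda>\<xi>::real. 0::real) has_integral 0) {0<..}" by (rule has_integral_0)
  then show ?thesis using True
    by (rule_tac has_integral_eq[of _ "\<lambda>_. 0"]) auto
next
  case False
  then have bp: "b > 0" using b0 by auto
  define c where "c = sqrt b"
  have cp: "c > 0" using bp by (simp add: c_def)
  have cc: "c^2 = b" using b0 by (simp add: c_def)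
  have h1: "((\<lambda>x. x powr (1-2*a)) has_integral (c powr ((1-2*a)+1) / ((1-2*a)+1))) {0..c}"
    by (rule has_integral_powr_from_0) (use a1 cp in auto)
  have h1': "((\<lambda>\<xi>. min b (\<xi>^2) * \<xi> powr (-1-2*a)) has_integral (c powr ((1-2*a)+1) / ((1-2*a)+1))) {0..c}"
  proof (rule has_integral_eq[OF _ h1])
    fix x assume x: "x \<in> {0..c}"
    show "x powr (1-2*a) = min b (x^2) * x powr (-1-2*a)"
    proof (cases "x = 0")
      case True then show ?thesis by simp
    next
      case False
      then have xp: "x > 0" using x by auto
      have "x^2 \<le> b" using x cc by (auto intro!: power_mono)
      then have "min b (x^2) * x powr (-1-2*a) = x powr 2 * x powr (-1-2*a)"
        using xp by (simp add: powr_realpow)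
      also have "\<dots> = x powr (1-2*a)" by (simp add: powr_add[symmetric])
      finally show ?thesis by simp
    qed
  qed
  have h2: "((\<lambda>x. x powr (-1-2*a)) has_integral -(c powr ((-1-2*a)+1)) / ((-1-2*a)+1)) {c..}"
    by (rule has_integral_powr_to_inf) (use a0 cp in auto)
  have h2': "((\<lambda>\<xi>. min b (\<xi>^2) * \<xi> powr (-1-2*a)) has_integral b * (-(c powr ((-1-2*a)+1)) / ((-1-2*a)+1))) {c..}"
  proof (rule has_integral_eq[OF _ has_integral_mult_right[OF h2]])
    fix x assume x: "x \<in> {c..}"
    have "b \<le> x^2" using x cc cp by (auto intro!: power_mono)
    then show "b * x powr (-1-2*a) = min b (x^2) * x powr (-1-2*a)" by simp
  qed
  have h3: "((\<lambda>\<xi>. min b (\<xi>^2) * \<xi> powr (-1-2*a)) has_integral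
     (c powr ((1-2*a)+1) / ((1-2*a)+1) + b * (-(c powr ((-1-2*a)+1)) / ((-1-2*a)+1)))) ({0..c} \<union> {c..})"
    proof (rule has_integral_Un[OF h1' h2'])
    have "{0..c} \<inter> {c..} = {c}" using cp by auto
    then show "negligible ({0..c} \<inter> {c..})" by simp
  qed
  have un: "{0..c} \<union> {c..} = {0::real..}" using cp by auto
  have val: "c powr ((1-2*a)+1) / ((1-2*a)+1) + b * (-(c powr ((-1-2*a)+1)) / ((-1-2*a)+1))
      = b powr (1-a) / (2*a*(1-a))"
  proof -
    have e1: "c powr ((1-2*a)+1) = b powr (1-a)"
      unfolding c_def using bp by (simp add: powr_half_sqrt[symmetric] powr_powr algebra_simps)
    have e2: "b * c powr ((-1-2*a)+1) = b powr (1-a)"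
    proof -
      have q: "b powr (1 + (-a)) = b powr 1 * b powr (-a)" by (rule powr_add)
      have "c powr ((-1-2*a)+1) = b powr (-a)"
        unfolding c_def using bp by (simp add: powr_half_sqrt[symmetric] powr_powr)
      then show ?thesis using q bp by simp
    qed
    have "c powr ((1-2*a)+1) / ((1-2*a)+1) + b * (-(c powr ((-1-2*a)+1)) / ((-1-2*a)+1))
        = b powr (1-a) / (2-2*a) + (b * c powr ((-1-2*a)+1)) / (2*a)"
      using e1 by (simp add: algebra_simps)
    also have "\<dots> = b powr (1-a) / (2-2*a) + b powr (1-a) / (2*a)" using e2 by simp
    also have "\<dots> = b powr (1-a) / (2*a*(1-a))" using a0 a1 by (simp add: field_simps)
    finally show ?thesis .
  qed
  have h4: "((\<lambda>\<xi>. min b (\<xi>^2) * \<xi> powr (-1-2*a)) has_integral (b powr (1-a) / (2*a*(1-a)))) {0..}"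
    using h3 un val by simp
  show ?thesis
    by (rule iffD1[OF has_integral_spike_set_eq h4]) (auto intro: negligible_subset[of "{0}"])
qed

lemma concave_bound:
  fixes f :: "real \<Rightarrow> real"
  assumes cv: "convex_on {0..} (\<lambda>x. f (sqrt x))" and f0: "f 0 = 1"
    and s0: "0 < s0" and ss: "s0 \<le> s"
  shows "1 - f (sqrt s) \<le> (s / s0) * (1 - f (sqrt s0))"
proof -
  define u where "u = s0 / s"
  have sp: "s > 0" using s0 ss by auto
  have u0: "0 \<le> u" "u \<le> 1" using s0 ss sp by (auto simp: u_def)
  have "f (sqrt ((1 - u) *\<^sub>R 0 + u *\<^sub>R s)) \<le> (1 - u) * f (sqrt 0) + u * f (sqrt s)"
    by (rule convex_onD[OF cv]) (use u0 sp in auto)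
  moreover have "(1 - u) *\<^sub>R 0 + u *\<^sub>R s = s0" using sp by (simp add: u_def)
  ultimately have "f (sqrt s0) \<le> (1 - u) + u * f (sqrt s)" using f0 by simp
  then have "u * (1 - f (sqrt s)) \<le> 1 - f (sqrt s0)" by (simp add: algebra_simps)
  then have "(s/s0) * (u * (1 - f (sqrt s))) \<le> (s/s0) * (1 - f (sqrt s0))"
    using sp s0 by (intro mult_left_mono) auto
  moreover have eq: "(s/s0) * u = 1" using sp s0 by (simp add: u_def)
  have "(s/s0) * (u * (1 - f (sqrt s))) = ((s/s0) * u) * (1 - f (sqrt s))"
    by (rule mult.assoc[symmetric])
  then have "(s/s0) * (u * (1 - f (sqrt s))) = 1 - f (sqrt s)" by (simp only: eq mult_1)
  ultimately show ?thesis by linarith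
qed

lemma powr_helper:
  fixes t x a :: real
  assumes tp: "t > 0" and xp: "x > 0" shows "(t/x^2) powr a = t powr a * x powr (- 2*a)"
proof -
  have e: "x^2 = x powr 2" using xp by simp
  have "(x^2) powr a = x powr (2*a)"
    unfolding e by (simp add: powr_powr)
  moreover have "x powr (- 2*a) = inverse (x powr (2*a))"
    using powr_minus[of x "2*a"] by simp
  moreover have "(t/x^2) powr a = t powr a / (x^2) powr a"
    using tp xp by (simp add: powr_divide)
  ultimately show ?thesis by (simp add: divide_inverse)
qed

theorem mainTheorem4:
  fixes \<alpha> x :: real and f :: "real \<Rightarrow> real"
  assumes "0 < \<alpha>" and "\<alpha> < 1" and "f \<in> V1 \<alpha>" and "0 < x"
  shows "cf \<alpha> f \<le> (1 + 2*\<alpha>) / (3 * (1 - \<alpha>)) * c1 \<alpha>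
           * (1 - f x) powr (min (1 - \<alpha>) \<alpha>) * (1 + x powr (- 2*\<alpha>))"
proof -
  note a0 = assms(1) and a1 = assms(2) and xp = assms(4)
  have f0: "f 0 = 1" and fnn: "\<And>y. 0 \<le> y \<Longrightarrow> 0 \<le> f y"
    and fmono: "\<And>y z. 0 \<le> y \<Longrightarrow> y \<le> z \<Longrightarrow> f z \<le> f y"
    and cv: "convex_on {0..} (\<lambda>x. f (sqrt x))"
    and flow: "\<And>y. max 0 (1 - y\<^sup>2) \<le> f y"
    using assms(3) unfolding V1_def by auto
  define t where "t = 1 - f x"
  have t0: "0 \<le> t" using fmono[of 0 x] xp f0 by (simp add: t_def)
  have t1: "t \<le> 1" using fnn[of x] xp by (simp add: t_def)
  define G where "G = (\<lambda>\<xi>::real. min t (\<xi>^2) * \<xi> powr (-1-2*\<alpha>)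
      + (t/x^2) * (min (x^2/t) (\<xi>^2) * \<xi> powr (-1-2*\<alpha>)))"
  define K where "K = 2*\<alpha>*(1-\<alpha>)"
  define I where "I = t powr (1-\<alpha>) / K + (t/x^2) * ((x^2/t) powr (1-\<alpha>) / K)"
  have Gint: "(G has_integral I) {0<..}"
    unfolding G_def I_def K_def
    by (intro has_integral_add has_integral_mult_right core) (use a0 a1 t0 in auto)
  have Gnn: "0 \<le> G \<xi>" if "\<xi> > 0" for \<xi>
    unfolding G_def using t0 xp that by (intro add_nonneg_nonneg mult_nonneg_nonneg) auto
  have Gcont: "continuous_on {0<..} G"
    unfolding G_def by (intro continuous_intros) auto
  have Gmeas: "(\<lambda>\<xi>. indicator {0<..} \<xi> *\<^sub>R G \<xi>) \<in> borel_measurable lborel"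
    using borel_measurable_continuous_on_indicator[OF _ Gcont] by simp
  have Gabs: "G absolutely_integrable_on {0<..}"
    by (rule nonnegative_absolutely_integrable_1) (use Gint Gnn in auto)
  have Gset: "set_integrable lborel {0<..} G"
    using Gabs Gmeas unfolding set_integrable_def by (simp add: integrable_completion)
  have LG: "(LBINT \<xi>:{0<..}. G \<xi>) = I"
    using set_borel_integral_eq_integral(2)[OF Gset] Gint by (simp add: integral_unique)
  have pw: "(1 - f \<xi>) / \<xi> powr (1 + 2*\<alpha>) \<le> G \<xi>" if xi: "\<xi> > 0" for \<xi>
  proof -
    have key: "1 - f \<xi> \<le> min t (\<xi>^2) + (t/x^2) * min (x^2/t) (\<xi>^2)"
    proof (cases "\<xi> \<le> x")
      case True
      have "1 - f \<xi> \<le> t" using fmono[of \<xi> x] True xi by (simp add: t_def)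
      moreover have "1 - f \<xi> \<le> \<xi>^2" using flow[of \<xi>] by simp
      moreover have "0 \<le> (t/x^2) * min (x^2/t) (\<xi>^2)" using t0 by auto
      ultimately show ?thesis by linarith
    next
      case False
      have cb: "1 - f (sqrt (\<xi>^2)) \<le> (\<xi>^2 / x^2) * (1 - f (sqrt (x^2)))"
        by (rule concave_bound[OF cv f0]) (use xp False in \<open>auto intro!: power_mono\<close>)
      then have c1': "1 - f \<xi> \<le> (\<xi>^2 / x^2) * t" using xi xp by (simp add: t_def)
      have c2: "1 - f \<xi> \<le> 1" using fnn[of \<xi>] xi by simp
      have "1 - f \<xi> \<le> (t/x^2) * min (x^2/t) (\<xi>^2)"
      proof (cases "t = 0")
        case True then show ?thesis using c1' by simp
      next
        case False
        then have tp: "t > 0" using t0 by auto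
        have "(t/x^2) * min (x^2/t) (\<xi>^2) = min 1 ((\<xi>^2 / x^2) * t)"
          using tp xp by (simp add: min_mult_distrib_left field_simps)
        then show ?thesis using c1' c2 by simp
      qed
      moreover have "0 \<le> min t (\<xi>^2)" using t0 by simp
      ultimately show ?thesis by linarith
    qed
    have pp: "\<xi> powr (-1-2*\<alpha>) = 1 / \<xi> powr (1 + 2*\<alpha>)"
      using xi by (simp add: powr_minus_divide[symmetric])
    have "(1 - f \<xi>) / \<xi> powr (1 + 2*\<alpha>) = (1 - f \<xi>) * \<xi> powr (-1-2*\<alpha>)"
      using pp by simp
    also have "\<dots> \<le> (min t (\<xi>^2) + (t/x^2) * min (x^2/t) (\<xi>^2)) * \<xi> powr (-1-2*\<alpha>)"
      by (rule mult_right_mono[OF key]) simp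
    also have "\<dots> = G \<xi>" unfolding G_def by (simp add: algebra_simps)
    finally show ?thesis .
  qed
  have intle: "(LBINT \<xi>:{0<..}. (1 - f \<xi>) / \<xi> powr (1 + 2*\<alpha>)) \<le> I"
  proof -
    have "(LBINT \<xi>:{0<..}. (1 - f \<xi>) / \<xi> powr (1 + 2*\<alpha>)) \<le> (LBINT \<xi>:{0<..}. G \<xi>)"
      unfolding set_lebesgue_integral_def
    proof (rule integral_mono_AE')
      show "integrable lborel (\<lambda>\<xi>. indicator {0<..} \<xi> *\<^sub>R G \<xi>)"
        using Gset unfolding set_integrable_def .
      show "AE \<xi> in lborel. indicator {0<..} \<xi> *\<^sub>R ((1 - f \<xi>) / \<xi> powr (1 + 2*\<alpha>))
               \<le> indicator {0<..} \<xi> *\<^sub>R G \<xi>"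
        using pw by (intro AE_I2) (auto simp: indicator_def)
      show "AE \<xi> in lborel. 0 \<le> indicator {0<..} \<xi> *\<^sub>R G \<xi>"
        using Gnn by (intro AE_I2) (auto simp: indicator_def)
    qed
    then show ?thesis using LG by simp
  qed
  define m where "m = min (1 - \<alpha>) \<alpha>"
  have KI: "K * I \<le> t powr m * (1 + x powr (- 2*\<alpha>))"
  proof -
    have Kp: "K > 0" using a0 a1 by (simp add: K_def)
    have e1: "t powr (1-\<alpha>) \<le> t powr m"
    proof (cases "t = 0")
      case False
      then show ?thesis using t0 t1 by (intro powr_mono') (auto simp: m_def)
    qed simp
    have e2: "(t/x^2) * (x^2/t) powr (1-\<alpha>) \<le> t powr m * x powr (- 2*\<alpha>)"
    proof (cases "t = 0")
      case False
      then have tp: "t > 0" using t0 by auto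
      define r where "r = t/x^2"
      have rp: "r > 0" using tp xp by (simp add: r_def)
      have ir: "x^2/t = inverse r" by (simp add: r_def)
      have A: "r powr \<alpha> * r powr (1-\<alpha>) = r" using rp by (simp add: powr_add[symmetric])
      have B: "r powr (1-\<alpha>) > 0" using rp by simp
      have "(t/x^2) * (x^2/t) powr (1-\<alpha>) = r * (inverse r) powr (1-\<alpha>)"
        by (metis ir r_def)
      also have "\<dots> = r * inverse (r powr (1-\<alpha>))" by (simp only: inverse_powr)
      also have "\<dots> = r powr \<alpha>" using A B by (simp add: field_simps)
      also have "\<dots> = (t/x^2) powr \<alpha>" by (simp add: r_def)
      also have "\<dots> = t powr \<alpha> * x powr (- 2*\<alpha>)"
        using tp xp by (rule powr_helper)
      also have "\<dots> \<le> t powr m * x powr (- 2*\<alpha>)"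
        using tp t1 by (intro mult_right_mono powr_mono') (auto simp: m_def)
      finally show ?thesis .
    qed simp
    have "K * I = t powr (1-\<alpha>) + (t/x^2) * (x^2/t) powr (1-\<alpha>)"
      using Kp by (simp add: I_def field_simps)
    also have "\<dots> \<le> t powr m * (1 + x powr (- 2*\<alpha>))"
      using e1 e2 by (simp add: algebra_simps)
    finally show ?thesis .
  qed
  have c1p: "0 \<le> c1 \<alpha>"
    unfolding c1_def using a0 a1
    by (intro divide_nonneg_pos mult_nonneg_nonneg mult_pos_pos Gamma_real_pos) auto
  have "cf \<alpha> f \<le> 2*\<alpha>*(1 + 2*\<alpha>) / 3 * c1 \<alpha> * I"
    unfolding cf_def using intle c1p a0
    by (intro mult_left_mono) auto
  also have "\<dots> = (1 + 2*\<alpha>) / (3 * (1 - \<alpha>)) * c1 \<alpha> * (K * I)"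
    using a0 a1 by (simp add: K_def field_simps)
  also have "\<dots> \<le> (1 + 2*\<alpha>) / (3 * (1 - \<alpha>)) * c1 \<alpha> * (t powr m * (1 + x powr (- 2*\<alpha>)))"
    using KI c1p a0 a1 by (intro mult_left_mono mult_nonneg_nonneg) auto
  finally show ?thesis by (simp add: t_def m_def mult.assoc)
qed

end
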